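(* Let $n \ge r \ge 1$, let $\bm U^\star \in \mathbb{R}^{n\times r}$ have rows $\bm u_1^\star,\dots,\bm u_n^\star\in\mathbb{R}^r$, let $\bm M = \bm U^\star\bm U^{\star T}$ (noiseless case), let $\Omega = \{(i,j)\in[n]\times[n]: m_{ij}\ge 0\}$, and let $F(\bm U) = \frac14\|(\bm U\bm U^T - \bm M)_\Omega\|_F^2$ for $\bm U\in\mathbb{R}^{n\times r}$. Let $\mathcal{C}_1,\dots,\mathcal{C}_{2^r}$ be the orthants of $\mathbb{R}^r$, ordered so that consecutive orthants $\mathcal{C}_i,\mathcal{C}_{i+1}$ have sign patterns differing in exactly one coordinate. Suppose $[n]$ is partitioned into $J_1,\dots,J_{2^r}$ with $\bm u_k^\star\in\mathcal{C}_i$ for all $k\in J_i$, let $\bm U_i^\star$ be the submatrix of rows of $\bm U^\star$ indexed by $J_i$, and assume: (1) $\mathrm{rank}(\bm U_i^\star)=r$ for all $i\in[2^r]$; (2) for every $i\in[2^r-1]$, with $\Omega_{i+1,i}=\{(k,l)\in J_{i+1}\times J_i: \bm u_k^{\star T}\bm u_l^\star\ge 0\}$, we have $|\Omega_{i+1,i}|\ge r^2$ and $\mathrm{span}\{\bm u_k^\star\bm u_l^{\star T}:(k,l)\in\Omega_{i+1,i}\} = \mathbb{R}^{r\times r}$. Define $$\gamma := \min\left\{ \|(\bm U^\star\bm D^T + \bm D\bm U^{\star T})_\Omega\|_F^2 \;:\; \bm D\in\mathcal{S}^\perp_{\bm U^\star},\ \|\bm D\|_F = 1\right\}.$$ Then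 $\gamma>0$, and $F$ is geodesically strongly convex on the quotient manifold $\mathcal{M}$ at $[\bm U^\star]$: for every tangent vector $\bm\xi\in \mathrm{T}_{[\bm U^\star]}\mathcal{M}$, $$\mathrm{Hess}\,F([\bm U^\star])[\bm\xi,\bm\xi] \ge \frac{\gamma}{2}\,\|\mathrm{lift}_{\bm U^\star}(\bm\xi)\|_F^2,$$ equivalently $\nabla^2F(\bm U^\star)[\bm D,\bm D]\ge \frac{\gamma}{2}\|\bm D\|_F^2$ for every $\bm D\in\mathcal{S}^\perp_{\bm U^\star}$.
   Context: $(\bm A)_\Omega$ keeps the entries of $\bm A$ in $\Omega$ and zeroes the rest. The quotient manifold is $\mathcal{M}=\mathbb{R}^{n\times r}/\sim$, where $\bm V\sim\bm U$ iff $\bm V=\bm U\bm Q$ for some orthogonal $\bm Q\in\mathbb{R}^{r\times r}$; $[\bm U]$ is the equivalence class. The vertical space at $\bm U$ is $\mathcal{S}_{\bm U}=\{\bm U\bm R: \bm R\in\mathbb{R}^{r\times r},\ \bm R+\bm R^T=\bm 0\}$ and the horizontal space is its orthogonal complement $\mathcal{S}^\perp_{\bm U}=\{\bm D\in\mathbb{R}^{n\times r}: \bm U^T\bm D = \bm D^T\bm U\}$. The map $\mathrm{lift}_{\bm U}:\mathrm{T}_{[\bm U]}\mathcal{M}\to\mathcal{S}^\perp_{\bm U}$ is the standard bijection between tangent vectors of the quotient and horizontal vectors, and the Riemannian Hessian is given by $\mathrm{Hess}\,F([\bm U])[\bm\xi,\bm\xi] = \nabla^2F(\bm U)[\mathrm{lift}_{\bm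 U}(\bm\xi),\mathrm{lift}_{\bm U}(\bm\xi)]$, where $\nabla^2F(\bm U)[\bm D,\bm D]$ is the Euclidean Hessian quadratic form of $F$ at $\bm U$ in direction $\bm D$. *)

theory Defs
  imports "HOL-Analysis.Analysis"
begin

text \<open>Matrices in R^(n x r) are rendered as real^'r^'n (rows U$k :: real^'r).
  The norm on real^'r^'n is the Frobenius norm.\<close>

definition mask :: "('n \<times> 'm) set \<Rightarrow> real^'m^'n \<Rightarrow> real^'m^'n" where
  "mask \<Omega> A = (\<chi> i j. if (i, j) \<in> \<Omega> then A $ i $ j else 0)"

definition obs_set :: "real^'n^'n \<Rightarrow> ('n \<times> 'n) set" where
  "obs_set M = {(i, j). M $ i $ j \<ge> 0}"

definition objF :: "real^'n^'n \<Rightarrow> real^'r^'n \<Rightarrow> real" where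
  "objF M U = (1/4) * (norm (mask (obs_set M) (U ** transpose U - M)))\<^sup>2"

definition hess_quad :: "('a::real_vector \<Rightarrow> real) \<Rightarrow> 'a \<Rightarrow> 'a \<Rightarrow> real" where
  "hess_quad F U D = deriv (deriv (\<lambda>t. F (U + t *\<^sub>R D))) 0"

definition horizontal :: "real^'r^'n \<Rightarrow> (real^'r^'n) set" where
  "horizontal U = {D. transpose U ** D = transpose D ** U}"

definition orthant :: "('r \<Rightarrow> bool) \<Rightarrow> (real^'r) set" where
  "orthant s = {x. \<forall>j. if s j then 0 \<le> x $ j else x $ j \<le> 0}"

definition outer :: "real^'r \<Rightarrow> real^'r \<Rightarrow> real^'r^'r" where
  "outer u v = (\<chi> a b. u $ a * v $ b)"

definition gamma_const :: "real^'r^'n \<Rightarrow> real" where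
  "gamma_const U = Inf ((\<lambda>D. (norm (mask (obs_set (U ** transpose U))
        (U ** transpose D + D ** transpose U)))\<^sup>2) ` {D \<in> horizontal U. norm D = 1})"

end

theory Submission
  imports Defs
begin

lemma block_skew:
  fixes u d :: "'n \<Rightarrow> real^'r" and J :: "'n set"
  assumes sp: "span (u ` J) = UNIV"
    and cond: "\<forall>k\<in>J. \<forall>l\<in>J. u k \<bullet> d l + d k \<bullet> u l = 0"
  shows "\<exists>S::real^'r^'r. (\<forall>x y. (S *v x) \<bullet> y + x \<bullet> (S *v y) = 0) \<and> (\<forall>k\<in>J. d k = S *v u k)"
proof -
  obtain B where B: "B \<subseteq> u ` J" "independent B" "u ` J \<subseteq> span B"
    by (rule basis_exists)
  have "span (u ` J) \<subseteq> span B"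
    using B(3) by (rule span_minimal) (rule subspace_span)
  then have spB: "span B = UNIV"
    using sp by auto
  define ch where "ch b = (SOME k. k \<in> J \<and> u k = b)" for b
  have ch: "ch b \<in> J \<and> u (ch b) = b" if "b \<in> B" for b
  proof -
    have "\<exists>k. k \<in> J \<and> u k = b" using B(1) that by auto
    then show ?thesis unfolding ch_def by (rule someI_ex)
  qed
  obtain g where g: "linear g" "\<forall>x\<in>B. g x = d (ch x)"
    using linear_independent_extend[OF B(2), of "\<lambda>b. d (ch b)"] by blast
  have sk1: "g x \<bullet> y + x \<bullet> g y = 0" if yB: "y \<in> B" for x y
  proof -
    have "x \<in> span B" using spB by auto
    then show ?thesis
    proof (induction rule: span_induct)
      case (step x)
      note base = step
      have e: "u (ch x) \<bullet> d (ch y) + d (ch x) \<bullet> u (ch y) = 0"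
        using cond ch[OF base] ch[OF yB] by blast
      have "g x \<bullet> y + x \<bullet> g y = u (ch x) \<bullet> d (ch y) + d (ch x) \<bullet> u (ch y)"
        using g(2) base yB ch[OF base] ch[OF yB] by simp
      then show ?case using e by simp
    next
      case base
      show ?case
        unfolding subspace_def
        by (simp add: linear_add[OF g(1)] linear_scale[OF g(1)] linear_0[OF g(1)]
            inner_add_left inner_add_right inner_scaleR_left inner_scaleR_right flip: distrib_left)
    qed
  qed
  have sk: "g x \<bullet> y + x \<bullet> g y = 0" for x y
  proof -
    have "y \<in> span B" using spB by auto
    then show ?thesis
    proof (induction rule: span_induct)
      case (step y)
      then show ?case using sk1 by blast
    next
      case base
      show ?case
        unfolding subspace_def
        by (simp add: linear_add[OF g(1)] linear_scale[OF g(1)] linear_0[OF g(1)]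
            inner_add_left inner_add_right inner_scaleR_left inner_scaleR_right flip: distrib_left)
    qed
  qed
  have dk: "d k = g (u k)" if k: "k \<in> J" for k
  proof -
    define e where "e = d k - g (u k)"
    have ob: "orthogonal e b" if "b \<in> B" for b
    proof -
      have "u k \<bullet> d (ch b) + d k \<bullet> u (ch b) = 0" using cond k ch[OF that] by blast
      moreover have "g (u k) \<bullet> b + u k \<bullet> g b = 0" using sk by blast
      ultimately show ?thesis using ch[OF that] g(2) that
        by (simp add: orthogonal_def e_def inner_diff_left)
    qed
    then have "orthogonal e e"
      using orthogonal_to_span[of e B e] spB ob by blast
    then show ?thesis unfolding e_def orthogonal_def by simp
  qed
  have mg: "matrix g *v x = g x" for x
    using fun_cong[OF matrix_vector_mul(2)[OF g(1)], of x] by simp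
  show ?thesis
    by (rule exI[of _ "matrix g"]) (simp add: mg sk dk)
qed

lemma outer_inner: "outer u v \<bullet> A = u \<bullet> (A *v v)"
  unfolding outer_def inner_vec_def matrix_vector_mult_def
  by (auto intro!: sum.cong simp: sum_distrib_left mult_ac)

lemma cross_eq:
  fixes S T :: "real^'r^'r" and u :: "'n \<Rightarrow> real^'r" and X :: "('n \<times> 'n) set"
  assumes sp: "span ((\<lambda>(k, l). outer (u k) (u l)) ` X) = UNIV"
    and c: "\<forall>(k,l)\<in>X. u k \<bullet> (S *v u l) = u k \<bullet> (T *v u l)"
  shows "S = T"
proof -
  define A where "A = S - T"
  have "orthogonal A x" if xin: "x \<in> (\<lambda>(k, l). outer (u k) (u l)) ` X" for x
  proof -
    obtain p where p: "p \<in> X" "x = (\<lambda>(k, l). outer (u k) (u l)) p" using xin by blast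
    obtain a b where ab: "(a,b) \<in> X" "x = outer (u a) (u b)" using p by (cases p) auto
    have "x \<bullet> A = u a \<bullet> (S *v u b) - u a \<bullet> (T *v u b)"
      unfolding ab outer_inner A_def by (simp add: matrix_vector_mult_diff_rdistrib inner_diff_right)
    then show ?thesis using c ab(1) by (auto simp: orthogonal_def inner_commute)
  qed
  then have "orthogonal A A" using orthogonal_to_span[of A _ A] sp by blast
  then show ?thesis unfolding orthogonal_def A_def by simp
qed

lemma mmt_entry: "(A ** transpose B) $ k $ l = A$k \<bullet> (B$l :: real^'r)"
  by (simp add: matrix_matrix_mult_def transpose_def inner_vec_def)

lemma tm_entry: "(transpose A ** B)$a$b = (\<Sum>k\<in>UNIV. A$k$a * (B$k$b::real))"
  by (simp add: matrix_matrix_mult_def transpose_def)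

lemma skew_entry:
  fixes S :: "real^'r^'r"
  assumes "\<forall>x y. (S *v x) \<bullet> y + x \<bullet> (S *v y) = 0"
  shows "S$a$b = - S$b$a"
proof -
  have "(S *v axis b 1) \<bullet> axis a 1 + axis b 1 \<bullet> (S *v axis a 1) = 0" using assms by blast
  moreover have "(S *v axis j 1) $ i = S $ i $ j" for i j
    by (metis cart_eq_inner_axis matrix_vector_mul_component)
  ultimately show ?thesis by (simp add: inner_axis inner_axis')
qed

lemma final_zero:
  fixes U D :: "real^'r^'n" and S :: "real^'r^'r"
  assumes hor: "D \<in> horizontal U"
    and sk: "\<forall>x y. (S *v x) \<bullet> y + x \<bullet> (S *v y) = 0"
    and dk: "\<forall>k. D$k = S *v U$k"
  shows "D = 0"
proof -
  define H where "H = transpose U ** D"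
  have Hs: "H$b$a = H$a$b" for a b
  proof -
    have "H = transpose D ** U" using hor unfolding horizontal_def H_def by simp
    then have "H$b$a = (\<Sum>k\<in>UNIV. D$k$b * U$k$a)" by (simp add: tm_entry)
    also have "\<dots> = H$a$b" unfolding H_def tm_entry by (simp add: mult.commute)
    finally show ?thesis .
  qed
  define T where "T = (\<Sum>a\<in>UNIV. \<Sum>b\<in>UNIV. S$a$b * H$b$a)"
  have "D \<bullet> D = (\<Sum>k\<in>UNIV. (S *v U$k) \<bullet> D$k)" using dk by (simp add: inner_vec_def)
  also have "\<dots> = (\<Sum>k\<in>UNIV. \<Sum>a\<in>UNIV. \<Sum>b\<in>UNIV. S$a$b * U$k$b * D$k$a)"
    by (simp add: inner_vec_def matrix_vector_mult_def sum_distrib_right)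
  also have "\<dots> = (\<Sum>a\<in>UNIV. \<Sum>k\<in>UNIV. \<Sum>b\<in>UNIV. S$a$b * U$k$b * D$k$a)"
    by (rule sum.swap)
  also have "\<dots> = (\<Sum>a\<in>UNIV. \<Sum>b\<in>UNIV. \<Sum>k\<in>UNIV. S$a$b * U$k$b * D$k$a)"
    by (rule sum.cong[OF refl], rule sum.swap)
  also have "\<dots> = T"
    unfolding T_def H_def tm_entry by (simp add: sum_distrib_left mult.assoc)
  finally have DT: "D \<bullet> D = T" .
  have sw: "S$a$b * H$b$a = - (S$b$a * H$a$b)" for a b
    using skew_entry[OF sk, of a b] Hs[of a b] by simp
  have "T = (\<Sum>b\<in>UNIV. \<Sum>a\<in>UNIV. S$a$b * H$b$a)" unfolding T_def by (rule sum.swap)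
  also have "\<dots> = (\<Sum>b\<in>UNIV. \<Sum>a\<in>UNIV. - (S$b$a * H$a$b))"
    by (intro sum.cong refl, rule sw)
  also have "\<dots> = - T" unfolding T_def
    by (simp only: sum_negf)
  finally have "T = 0" by simp
  then show ?thesis using DT by simp
qed

lemma orth_nn:
  fixes u v :: "real^'r"
  assumes "u \<in> orthant s" "v \<in> orthant s"
  shows "u \<bullet> v \<ge> 0"
  unfolding inner_vec_def
proof (rule sum_nonneg)
  fix j
  show "0 \<le> u $ j \<bullet> v $ j"
    using assms unfolding orthant_def inner_real_def
    by (cases "s j") (auto intro: mult_nonneg_nonneg mult_nonpos_nonpos)
qed

lemma key:
  fixes U D :: "real^'r^'n" and sgn :: "nat \<Rightarrow> 'r \<Rightarrow> bool" and J :: "nat \<Rightarrow> 'n set" and N :: nat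
  assumes cover: "(\<Union>i<N. J i) = UNIV"
    and in_orth: "\<forall>i<N. \<forall>k\<in>J i. U $ k \<in> orthant (sgn i)"
    and rank: "\<forall>i<N. dim (span ((\<lambda>k. U $ k) ` J i)) = CARD('r)"
    and span_cross: "\<forall>i. Suc i < N \<longrightarrow>
        span ((\<lambda>(k, l). outer (U $ k) (U $ l)) `
          {(k, l). k \<in> J (Suc i) \<and> l \<in> J i \<and> U $ k \<bullet> U $ l \<ge> 0}) = UNIV"
    and hor: "D \<in> horizontal U"
    and z: "\<forall>k l. U$k \<bullet> U$l \<ge> 0 \<longrightarrow> U$k \<bullet> D$l + D$k \<bullet> U$l = 0"
  shows "D = 0"
proof -
  have ex: "\<exists>S::real^'r^'r. (\<forall>x y. (S *v x) \<bullet> y + x \<bullet> (S *v y) = 0) \<and> (\<forall>k\<in>J i. D$k = S *v U$k)"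
    if i: "i < N" for i
  proof (rule block_skew)
    have "dim ((\<lambda>k. U $ k) ` J i) = DIM(real^'r)" using rank i by simp
    then show "span ((\<lambda>k. U $ k) ` J i) = UNIV" using dim_eq_full by blast
    show "\<forall>k\<in>J i. \<forall>l\<in>J i. U $ k \<bullet> D $ l + D $ k \<bullet> U $ l = 0"
      using in_orth i z orth_nn by blast
  qed
  then obtain S where S: "\<And>i. i < N \<Longrightarrow> (\<forall>x y. (S i *v x) \<bullet> y + x \<bullet> (S i *v y) = 0) \<and> (\<forall>k\<in>J i. D$k = S i *v U$k)"
    by metis
  have S0: "S i = S 0" if "i < N" for i
    using that
  proof (induction i)
    case 0
    then show ?case by simp
  next
    case (Suc i)
    have "S (Suc i) = S i"
    proof (rule cross_eq[where u = "\<lambda>k. U $ k"])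
      show "span ((\<lambda>(k, l). outer (U $ k) (U $ l)) `
          {(k, l). k \<in> J (Suc i) \<and> l \<in> J i \<and> U $ k \<bullet> U $ l \<ge> 0}) = UNIV"
        using span_cross Suc.prems by blast
      show "\<forall>(k, l)\<in>{(k, l). k \<in> J (Suc i) \<and> l \<in> J i \<and> U $ k \<bullet> U $ l \<ge> 0}.
          U $ k \<bullet> (S (Suc i) *v U $ l) = U $ k \<bullet> (S i *v U $ l)"
      proof (clarify)
        fix k l assume kl: "k \<in> J (Suc i)" "l \<in> J i" "0 \<le> U $ k \<bullet> U $ l"
        have a: "D$k = S (Suc i) *v U$k" using S[OF Suc.prems] kl by blast
        have b: "D$l = S i *v U$l" using S[of i] Suc.prems kl by auto
        have c: "(S (Suc i) *v U$k) \<bullet> U$l + U$k \<bullet> (S (Suc i) *v U$l) = 0"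
          using S[OF Suc.prems] by blast
        have "U$k \<bullet> D$l + D$k \<bullet> U$l = 0" using z kl by blast
        then show "U $ k \<bullet> (S (Suc i) *v U $ l) = U $ k \<bullet> (S i *v U $ l)"
          using a b c by (simp add: inner_commute)
      qed
    qed
    then show ?case using Suc by simp
  qed
  have "\<forall>k. D$k = S 0 *v U$k"
  proof
    fix k
    obtain i where "i < N" "k \<in> J i" using cover by blast
    then show "D$k = S 0 *v U$k" using S S0 by metis
  qed
  moreover have "0 < N" using cover by (metis UNIV_I UN_E lessThan_iff gr_zeroI less_nat_zero_code)
  ultimately show ?thesis using final_zero[OF hor] S by blast
qed

lemma norm_comb: "(norm (t *\<^sub>R P + s *\<^sub>R Q))\<^sup>2 = t * t * (P \<bullet> P) + 2 * t * s * (P \<bullet> Q) + s * s * (Q \<bullet> Q)"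
  by (simp add: power2_norm_eq_inner inner_add_left inner_add_right inner_commute algebra_simps)

theorem theorem3p5:
  fixes Ustar :: "real^'r^'n"
    and sgn :: "nat \<Rightarrow> 'r \<Rightarrow> bool"
    and J :: "nat \<Rightarrow> 'n set"
  defines "N \<equiv> (2::nat) ^ CARD('r)"
  assumes nr: "CARD('r) \<le> CARD('n)"
    and orth_enum: "bij_betw sgn {..<N} UNIV"
    and gray: "\<forall>i. Suc i < N \<longrightarrow> card {j. sgn (Suc i) j \<noteq> sgn i j} = 1"
    and disj: "\<forall>i<N. \<forall>i'<N. i \<noteq> i' \<longrightarrow> J i \<inter> J i' = {}"
    and cover: "(\<Union>i<N. J i) = UNIV"
    and in_orth: "\<forall>i<N. \<forall>k\<in>J i. Ustar $ k \<in> orthant (sgn i)"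
    and rank: "\<forall>i<N. dim (span ((\<lambda>k. Ustar $ k) ` J i)) = CARD('r)"
    and card_cross: "\<forall>i. Suc i < N \<longrightarrow>
        card {(k, l). k \<in> J (Suc i) \<and> l \<in> J i \<and> Ustar $ k \<bullet> Ustar $ l \<ge> 0} \<ge> CARD('r)^2"
    and span_cross: "\<forall>i. Suc i < N \<longrightarrow>
        span ((\<lambda>(k, l). outer (Ustar $ k) (Ustar $ l)) `
          {(k, l). k \<in> J (Suc i) \<and> l \<in> J i \<and> Ustar $ k \<bullet> Ustar $ l \<ge> 0}) = UNIV"
  shows "gamma_const Ustar > 0 \<and>
         (\<forall>D \<in> horizontal Ustar.
            hess_quad (objF (Ustar ** transpose Ustar)) Ustar D
              \<ge> gamma_const Ustar / 2 * (norm D)\<^sup>2)"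
proof -
  define U where "U = Ustar"
  define \<Omega> where "\<Omega> = obs_set (U ** transpose U)"
  define L where "L D = U ** transpose D + D ** transpose U" for D :: "real^'r^'n"
  define g where "g D = (norm (mask \<Omega> (L D)))\<^sup>2" for D
  define K where "K = {D \<in> horizontal U. norm D = 1}"
  have gam: "gamma_const Ustar = Inf (g ` K)"
    unfolding gamma_const_def g_def K_def L_def \<Omega>_def U_def ..
  have Lent: "L D $ k $ l = U$k \<bullet> D$l + D$k \<bullet> U$l" for D k l
    unfolding L_def by (simp add: mmt_entry inner_commute)
  have mask_lin: "mask \<Omega> (a *\<^sub>R X + b *\<^sub>R Y) = a *\<^sub>R mask \<Omega> X + b *\<^sub>R mask \<Omega> Y" for a b X Y
    by (simp add: mask_def vec_eq_iff)
  have linML: "linear (\<lambda>D. mask \<Omega> (L D))"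
    by (rule linearI) (simp_all add: vec_eq_iff mask_def Lent inner_add_left inner_add_right
        ring_distribs)
  have c1: "continuous_on UNIV (\<lambda>D. mask \<Omega> (L D))"
    using linear_continuous_on[OF linear_conv_bounded_linear[THEN iffD1, OF linML]] .
  have cont: "continuous_on UNIV g"
    unfolding g_def by (intro continuous_on_power continuous_on_norm c1)
  have hor_alt: "horizontal U = {D. (\<lambda>D. transpose U ** D - transpose D ** U) D = 0}"
    unfolding horizontal_def by simp
  have linH: "linear (\<lambda>D. transpose U ** D - transpose D ** U)"
    by (rule linearI) (simp_all add: vec_eq_iff tm_entry sum.distrib sum_distrib_left
         algebra_simps sum_subtractf)
  have closedH: "closed (horizontal U)"
    unfolding hor_alt
    by (rule closed_Collect_eq[OF
          linear_continuous_on[OF linear_conv_bounded_linear[THEN iffD1, OF linH]]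
          continuous_on_const])
  have horS: "c *\<^sub>R D \<in> horizontal U" if "D \<in> horizontal U" for c D
    using linear_cmul[OF linH, of c D] that unfolding hor_alt by simp
  have compK: "compact K"
  proof -
    have "K = horizontal U \<inter> sphere 0 1" unfolding K_def by auto
    then show ?thesis using closedH by (simp add: closed_Int_compact)
  qed
  have U0: "U \<noteq> 0"
  proof
    assume "U = 0"
    then have "(\<lambda>k. U $ k) ` J 0 \<subseteq> {0}" by auto
    then have "dim ((\<lambda>k. U $ k) ` J 0) = 0"
      using dim_eq_0 by blast
    moreover have "0 < N" unfolding N_def by simp
    then have "dim ((\<lambda>k. U $ k) ` J 0) = CARD('r)" using rank U_def by simp
    ultimately show False by simp
  qed
  have Kne: "K \<noteq> {}"
  proof -
    have "U \<in> horizontal U" unfolding horizontal_def by simp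
    then have "(1 / norm U) *\<^sub>R U \<in> K" unfolding K_def using horS U0 by simp
    then show ?thesis by blast
  qed
  obtain D0 where D0: "D0 \<in> K" "\<forall>y\<in>K. g D0 \<le> g y"
    using continuous_attains_inf[OF compK Kne continuous_on_subset[OF cont]] by blast
  have gamD0: "gamma_const Ustar = g D0"
    unfolding gam using D0 by (intro cInf_eq_minimum) auto
  have keyg: "D = 0" if "D \<in> horizontal U" "g D = 0" for D
  proof (rule key[where N=N and J=J and U=U and sgn=sgn])
    show "(\<Union>i<N. J i) = UNIV" by (rule cover)
    show "\<forall>i<N. \<forall>k\<in>J i. U $ k \<in> orthant (sgn i)" using in_orth U_def by simp
    show "\<forall>i<N. dim (span ((\<lambda>k. U $ k) ` J i)) = CARD('r)" using rank U_def by simp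
    show "\<forall>i. Suc i < N \<longrightarrow>
        span ((\<lambda>(k, l). outer (U $ k) (U $ l)) `
          {(k, l). k \<in> J (Suc i) \<and> l \<in> J i \<and> U $ k \<bullet> U $ l \<ge> 0}) = UNIV"
      using span_cross U_def by simp
    show "D \<in> horizontal U" by fact
    have m0: "mask \<Omega> (L D) = 0" using that(2) unfolding g_def by simp
    show "\<forall>k l. U$k \<bullet> U$l \<ge> 0 \<longrightarrow> U$k \<bullet> D$l + D$k \<bullet> U$l = 0"
    proof (intro allI impI)
      fix k l assume "U$k \<bullet> U$l \<ge> 0"
      then have "(k, l) \<in> \<Omega>" unfolding \<Omega>_def obs_set_def by (simp add: mmt_entry)
      then have "mask \<Omega> (L D) $ k $ l = L D $ k $ l" by (simp add: mask_def)
      then show "U$k \<bullet> D$l + D$k \<bullet> U$l = 0" using m0 Lent by simp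
    qed
  qed
  have gpos: "gamma_const Ustar > 0"
  proof -
    have "g D0 \<ge> 0" unfolding g_def by simp
    moreover have "g D0 \<noteq> 0"
    proof
      assume "g D0 = 0"
      then have "D0 = 0" using keyg D0(1) unfolding K_def by blast
      then show False using D0(1) unfolding K_def by simp
    qed
    ultimately show ?thesis using gamD0 by simp
  qed
  have gscale: "g (c *\<^sub>R D) = c\<^sup>2 * g D" for c D
    unfolding g_def using linear_cmul[OF linML, of c D]
    by (simp add: power_mult_distrib)
  have hess: "hess_quad (objF (Ustar ** transpose Ustar)) Ustar D = g D / 2" for D
  proof -
    define P where "P = mask \<Omega> (L D)"
    define Q where "Q = mask \<Omega> (D ** transpose D)"
    define a where "a = P \<bullet> P"
    define b where "b = P \<bullet> Q"
    define c where "c = Q \<bullet> Q"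
    have exp: "(U + t *\<^sub>R D) ** transpose (U + t *\<^sub>R D) - U ** transpose U
        = t *\<^sub>R L D + t\<^sup>2 *\<^sub>R (D ** transpose D)" for t
      by (simp add: vec_eq_iff mmt_entry Lent inner_add_left inner_add_right
          algebra_simps power2_eq_square inner_commute)
    have f: "(\<lambda>t. objF (Ustar ** transpose Ustar) (Ustar + t *\<^sub>R D))
        = (\<lambda>t. 1/4 * (t*t*a + 2*t*(t\<^sup>2)*b + (t\<^sup>2)*(t\<^sup>2)*c))"
    proof
      fix t
      have "objF (Ustar ** transpose Ustar) (Ustar + t *\<^sub>R D) =
          1/4 * (norm (mask \<Omega> (t *\<^sub>R L D + t\<^sup>2 *\<^sub>R (D ** transpose D))))\<^sup>2"
        unfolding objF_def \<Omega>_def U_def[symmetric] exp ..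
      also have "\<dots> = 1/4 * (norm (t *\<^sub>R P + t\<^sup>2 *\<^sub>R Q))\<^sup>2"
        unfolding P_def Q_def mask_lin ..
      also have "\<dots> = 1/4 * (t*t*a + 2*t*(t\<^sup>2)*b + (t\<^sup>2)*(t\<^sup>2)*c)"
        unfolding norm_comb a_def b_def c_def ..
      finally show "objF (Ustar ** transpose Ustar) (Ustar + t *\<^sub>R D) =
          1/4 * (t*t*a + 2*t*(t\<^sup>2)*b + (t\<^sup>2)*(t\<^sup>2)*c)" .
    qed
    have d1: "deriv (\<lambda>t. 1/4 * (t*t*a + 2*t*(t\<^sup>2)*b + (t\<^sup>2)*(t\<^sup>2)*c))
        = (\<lambda>t. 1/4 * (2*t*a + 6*t\<^sup>2*b + 4*t^3*c))"
    proof
      fix t :: real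
      show "deriv (\<lambda>t. 1/4 * (t*t*a + 2*t*(t\<^sup>2)*b + (t\<^sup>2)*(t\<^sup>2)*c)) t
          = 1/4 * (2*t*a + 6*t\<^sup>2*b + 4*t^3*c)"
        by (rule DERIV_imp_deriv, (rule derivative_eq_intros refl)+)
          (simp add: algebra_simps power2_eq_square power3_eq_cube)
    qed
    have d2: "deriv (\<lambda>t. 1/4 * (2*t*a + 6*t\<^sup>2*b + 4*t^3*c)) 0 = a / 2"
      by (rule DERIV_imp_deriv, (rule derivative_eq_intros refl)+) simp
    have "g D = a" unfolding g_def a_def P_def by (simp add: power2_norm_eq_inner)
    then show ?thesis unfolding hess_quad_def f d1 d2 by simp
  qed
  have ineq: "g D \<ge> gamma_const Ustar * (norm D)\<^sup>2" if hD: "D \<in> horizontal U" for D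
  proof (cases "D = 0")
    case True
    then show ?thesis unfolding g_def by simp
  next
    case False
    define D' where "D' = (1 / norm D) *\<^sub>R D"
    have "D' \<in> K" unfolding K_def D'_def using horS[OF hD] False by simp
    then have "gamma_const Ustar \<le> g D'" unfolding gam
      by (intro cInf_lower) (auto simp: bdd_below_def g_def intro!: exI[of _ 0])
    also have "\<dots> = g D / (norm D)\<^sup>2" unfolding D'_def gscale by (simp add: power_divide)
    finally show ?thesis using False by (simp add: pos_le_divide_eq)
  qed
  show ?thesis
  proof (intro conjI ballI gpos)
    fix D assume "D \<in> horizontal Ustar"
    then show "hess_quad (objF (Ustar ** transpose Ustar)) Ustar D
              \<ge> gamma_const Ustar / 2 * (norm D)\<^sup>2"
      using ineq[of D] hess[of D] U_def by simp
  qed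
qed

end
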